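(* Let $\zeta:G\to(0,\infty)$, with $G\subseteq\mathbb{R}^2$ open, be twice continuously differentiable. Then: (i) if $G$ is convex, then $\partial_x\partial_y\log\zeta\equiv0$ on $G$ if and only if $\zeta$ is separable; (ii) $\zeta$ is strictly non-separable if and only if the open set $G':=\{z\in G:\partial_x\partial_y\log\zeta(z)\neq0\}$ is dense in $G$; (iii) if $\mathcal{O}\subseteq G'$ is symmetric, open and convex, then $(\partial_x\partial_y\log\zeta)|_{\mathcal{O}}$ is separable and symmetric if and only if $\zeta|_{\mathcal{O}}$ is pseudo-Gaussian.
   Context: For $G\subseteq\mathbb{R}^2$ open, a function $\varsigma:G\to\mathbb{R}$ is pseudo-Gaussian if there are functions $\varsigma_1,\varsigma_2,\varsigma_3:\mathbb{R}\to\mathbb{R}$ and a fixed sign $\pm$ with $\varsigma(x,y)=\varsigma_1(x)\varsigma_2(y)\exp(\pm\varsigma_3(x)\varsigma_3(y))$ on all of $G$; it is separable if this holds with $\varsigma_3\equiv0$ (i.e. $\varsigma(x,y)=\varsigma_1(x)\varsigma_2(y)$). $\varsigma$ is strictly non-separable if $\varsigma|_{\mathcal{O}}$ is not separable for every nonempty open $\mathcal{O}\subseteq G$. A set $A\subseteq\mathbb{R}^2$ is symmetric if $\tau(A)=A$ for $\tau(u,v)=(v,u)$, and a function $\varphi$ on such a set is symmetric if $\varphi\circ\tau=\varphi$. *)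

theory Defs
  imports "HOL-Analysis.Analysis"
begin

definition px :: "(real \<times> real \<Rightarrow> real) \<Rightarrow> real \<times> real \<Rightarrow> real" where
  "px f = (\<lambda>(x, y). deriv (\<lambda>t. f (t, y)) x)"

definition py :: "(real \<times> real \<Rightarrow> real) \<Rightarrow> real \<times> real \<Rightarrow> real" where
  "py f = (\<lambda>(x, y). deriv (\<lambda>t. f (x, t)) y)"

definition has_partials_on :: "(real \<times> real) set \<Rightarrow> (real \<times> real \<Rightarrow> real) \<Rightarrow> bool" where
  "has_partials_on G f \<longleftrightarrow>
     (\<forall>x y. (x, y) \<in> G \<longrightarrow>
        (\<lambda>t. f (t, y)) differentiable (at x) \<and> (\<lambda>t. f (x, t)) differentiable (at y))"

definition C2_on :: "(real \<times> real) set \<Rightarrow> (real \<times> real \<Rightarrow> real) \<Rightarrow> bool" where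
  "C2_on G f \<longleftrightarrow>
     continuous_on G f \<and> has_partials_on G f \<and>
     continuous_on G (px f) \<and> continuous_on G (py f) \<and>
     has_partials_on G (px f) \<and> has_partials_on G (py f) \<and>
     continuous_on G (px (px f)) \<and> continuous_on G (px (py f)) \<and>
     continuous_on G (py (px f)) \<and> continuous_on G (py (py f))"

definition separable_on :: "(real \<times> real) set \<Rightarrow> (real \<times> real \<Rightarrow> real) \<Rightarrow> bool" where
  "separable_on G f \<longleftrightarrow>
     (\<exists>f1 f2 :: real \<Rightarrow> real. \<forall>x y. (x, y) \<in> G \<longrightarrow> f (x, y) = f1 x * f2 y)"

definition pseudo_gaussian_on :: "(real \<times> real) set \<Rightarrow> (real \<times> real \<Rightarrow> real) \<Rightarrow> bool" where
  "pseudo_gaussian_on G f \<longleftrightarrow>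
     (\<exists>(f1 :: real \<Rightarrow> real) (f2 :: real \<Rightarrow> real) (f3 :: real \<Rightarrow> real) (s :: real).
        (s = 1 \<or> s = -1) \<and>
        (\<forall>x y. (x, y) \<in> G \<longrightarrow> f (x, y) = f1 x * f2 y * exp (s * f3 x * f3 y)))"

definition strictly_non_separable_on :: "(real \<times> real) set \<Rightarrow> (real \<times> real \<Rightarrow> real) \<Rightarrow> bool" where
  "strictly_non_separable_on G f \<longleftrightarrow>
     (\<forall>U. open U \<and> U \<noteq> {} \<and> U \<subseteq> G \<longrightarrow> \<not> separable_on U f)"

definition swap2 :: "real \<times> real \<Rightarrow> real \<times> real" where
  "swap2 = (\<lambda>(u, v). (v, u))"

definition symmetric_set :: "(real \<times> real) set \<Rightarrow> bool" where
  "symmetric_set A \<longleftrightarrow> swap2 ` A = A"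

definition symmetric_fun_on :: "(real \<times> real) set \<Rightarrow> (real \<times> real \<Rightarrow> real) \<Rightarrow> bool" where
  "symmetric_fun_on A f \<longleftrightarrow> (\<forall>z\<in>A. f (swap2 z) = f z)"

definition dxdy_log :: "(real \<times> real \<Rightarrow> real) \<Rightarrow> real \<times> real \<Rightarrow> real" where
  "dxdy_log f = px (py (\<lambda>z. ln (f z)))"

end

theory Submission
  imports Defs
begin

lemma box_in_open:
  fixes x0 y0 :: real and U :: "(real \<times> real) set"
  assumes "open U" "(x0, y0) \<in> U"
  obtains d where "d > 0" "\<And>x y. \<bar>x - x0\<bar> < d \<Longrightarrow> \<bar>y - y0\<bar> < d \<Longrightarrow> (x, y) \<in> U"
proof -
  obtain e where e: "e > 0" "ball (x0, y0) e \<subseteq> U"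
    using assms open_contains_ball by blast
  show ?thesis
  proof (rule that[of "e / sqrt 2"])
    show "e / sqrt 2 > 0" using e by simp
    fix x y assume "\<bar>x - x0\<bar> < e / sqrt 2" "\<bar>y - y0\<bar> < e / sqrt 2"
    then have "\<bar>x0 - x\<bar> < e / sqrt 2" "\<bar>y0 - y\<bar> < e / sqrt 2" by (simp_all add: abs_minus_commute)
    then have "sqrt ((x0 - x)\<^sup>2 + (y0 - y)\<^sup>2) < e"
      by (rule real_sqrt_sum_squares_less)
    then have "dist (x0, y0) (x, y) < e"
      by (simp add: dist_Pair_Pair dist_real_def)
    then show "(x, y) \<in> U" using e by auto
  qed
qed

lemma antideriv:
  fixes P :: "real set" and h :: "real \<Rightarrow> real"
  assumes "open P" "convex P" "continuous_on P h"
  shows "\<exists>F. \<forall>x\<in>P. (F has_real_derivative h x) (at x)"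
proof (cases "P = {}")
  case True then show ?thesis by auto
next
  case False
  then obtain c where c: "c \<in> P" by auto
  have ivl: "\<And>a b. a \<in> P \<Longrightarrow> b \<in> P \<Longrightarrow> {a..b} \<subseteq> P"
  proof -
    have "is_interval P" using assms(2) by (simp add: is_interval_convex_1)
    then show "\<And>a b. a \<in> P \<Longrightarrow> b \<in> P \<Longrightarrow> {a..b} \<subseteq> P"
      unfolding is_interval_1 by (meson atLeastAtMost_iff subsetI)
  qed
  let ?F = "\<lambda>u. LBINT y=c..u. h y"
  show ?thesis
  proof (intro exI ballI)
    fix x assume x: "x \<in> P"
    obtain e1 where e1: "e1 > 0" "ball c e1 \<subseteq> P" using assms(1) c open_contains_ball by blast
    obtain e2 where e2: "e2 > 0" "ball x e2 \<subseteq> P" using assms(1) x open_contains_ball by blast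
    define m where "m = min e1 e2 / 2"
    have m: "m > 0" "m < e1" "m < e2" using e1 e2 by (auto simp: m_def)
    define d where "d = min c x - m"
    define e where "e = max c x + m"
    have "c - m \<in> P" using e1 m by (intro subsetD[OF e1(2)]) (auto simp: dist_real_def)
    moreover have "x - m \<in> P" using e2 m by (intro subsetD[OF e2(2)]) (auto simp: dist_real_def)
    ultimately have dP: "d \<in> P" by (auto simp: d_def min_def)
    have "c + m \<in> P" using e1 m by (intro subsetD[OF e1(2)]) (auto simp: dist_real_def)
    moreover have "x + m \<in> P" using e2 m by (intro subsetD[OF e2(2)]) (auto simp: dist_real_def)
    ultimately have eP: "e \<in> P" by (auto simp: e_def max_def)
    have cont: "continuous_on {d..e} h"
      using assms(3) ivl[OF dP eP] continuous_on_subset by blast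
    have "(?F has_vector_derivative h x) (at x within {d..e})"
      by (rule interval_integral_FTC2[OF _ _ cont]) (use m in \<open>auto simp: d_def e_def\<close>)
    then have "(?F has_vector_derivative h x) (at x within {d<..<e})"
      by (rule has_vector_derivative_within_subset) auto
    then have "(?F has_vector_derivative h x) (at x)"
      using m by (subst (asm) has_vector_derivative_within_open) (auto simp: d_def e_def)
    then show "(?F has_real_derivative h x) (at x)"
      by (simp add: has_real_derivative_iff_has_vector_derivative)
  qed
qed

lemma convex_slice1:
  fixes U :: "(real \<times> real) set"
  assumes "convex U" shows "convex {s. (s, y) \<in> U}"
  unfolding convex_def
proof (clarify)
  fix u v :: real and a b :: real
  assume h: "(u, y) \<in> U" "(v, y) \<in> U" "0 \<le> a" "0 \<le> b" "a + b = 1"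
  have "a *\<^sub>R (u, y) + b *\<^sub>R (v, y) \<in> U" by (rule convexD[OF assms h])
  moreover have "a * y + b * y = y" using h(5) by (metis distrib_right mult_1)
  then have "a *\<^sub>R (u, y) + b *\<^sub>R (v, y) = (a * u + b * v, y)" by simp
  ultimately show "(a *\<^sub>R u + b *\<^sub>R v, y) \<in> U" by simp
qed

lemma convex_slice2:
  fixes U :: "(real \<times> real) set"
  assumes "convex U" shows "convex {t. (x, t) \<in> U}"
  unfolding convex_def
proof (clarify)
  fix u v :: real and a b :: real
  assume h: "(x, u) \<in> U" "(x, v) \<in> U" "0 \<le> a" "0 \<le> b" "a + b = 1"
  have "a *\<^sub>R (x, u) + b *\<^sub>R (x, v) \<in> U" by (rule convexD[OF assms h])
  moreover have "a * x + b * x = x" using h(5) by (metis distrib_right mult_1)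
  then have "a *\<^sub>R (x, u) + b *\<^sub>R (x, v) = (x, a * u + b * v)" by simp
  ultimately show "(x, a *\<^sub>R u + b *\<^sub>R v) \<in> U" by simp
qed

lemma additive_split:
  fixes U :: "(real \<times> real) set" and \<phi> Q :: "real \<times> real \<Rightarrow> real"
  assumes U: "open U" "convex U" and contQ: "continuous_on U Q"
    and H1: "\<And>x y. (x, y) \<in> U \<Longrightarrow> ((\<lambda>t. \<phi> (x, t)) has_real_derivative Q (x, y)) (at y)"
    and H2: "\<And>x y. (x, y) \<in> U \<Longrightarrow> ((\<lambda>s. Q (s, y)) has_real_derivative 0) (at x)"
  shows "\<exists>a b. \<forall>x y. (x, y) \<in> U \<longrightarrow> \<phi> (x, y) = a x + b y"
proof -
  have sl: "Q (x, y) = Q (x', y)" if "(x, y) \<in> U" "(x', y) \<in> U" for x x' y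
  proof -
    have "\<exists>c. \<forall>s\<in>{s. (s, y) \<in> U}. Q (s, y) = c"
      by (rule has_field_derivative_zero_constant[OF convex_slice1[OF U(2)]])
        (use H2 has_field_derivative_at_within in blast)
    then show ?thesis using that by auto
  qed
  define \<beta> where "\<beta> y = Q (SOME x. (x, y) \<in> U, y)" for y
  have Q\<beta>: "Q (x, y) = \<beta> y" if "(x, y) \<in> U" for x y
    unfolding \<beta>_def by (rule sl[OF that someI[of "\<lambda>x. (x, y) \<in> U", OF that]])
  define P where "P = snd ` U"
  have Pin: "y \<in> P" if "(x, y) \<in> U" for x y using that by (force simp: P_def)
  have oP: "open P" unfolding P_def using U(1) by (rule open_image_snd)
  have cP: "convex P" unfolding P_def using U(2) by (rule convex_linear_image[OF linear_snd])
  have "continuous_on P \<beta>"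
  proof (subst continuous_on_eq_continuous_at[OF oP], intro ballI)
    fix y0 assume "y0 \<in> P"
    then obtain x0 where x0: "(x0, y0) \<in> U" by (auto simp: P_def)
    obtain d where d: "d > 0" "\<And>x y. \<bar>x - x0\<bar> < d \<Longrightarrow> \<bar>y - y0\<bar> < d \<Longrightarrow> (x, y) \<in> U"
      using box_in_open[OF U(1) x0] by blast
    have "isCont Q (x0, y0)" using contQ U(1) x0 continuous_on_eq_continuous_at by blast
    then have "isCont ((\<lambda>y. Q (x0, y))) y0"
      using continuous_at_compose[of y0 "\<lambda>y. (x0, y)" Q] by (simp add: o_def)
    then show "isCont \<beta> y0"
      by (rule continuous_transform_within[OF _ d(1)]) (auto simp: dist_real_def intro!: Q\<beta> d(2))
  qed
  then obtain B where B: "\<And>y. y \<in> P \<Longrightarrow> (B has_real_derivative \<beta> y) (at y)"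
    using antideriv[OF oP cP] by blast
  have cst: "\<exists>c. \<forall>t\<in>{t. (x, t) \<in> U}. \<phi> (x, t) - B t = c" for x
  proof (rule has_field_derivative_zero_constant[OF convex_slice2[OF U(2)]])
    fix t assume "t \<in> {t. (x, t) \<in> U}"
    then have t: "(x, t) \<in> U" by simp
    have "((\<lambda>t. \<phi> (x, t) - B t) has_real_derivative Q (x, t) - \<beta> t) (at t)"
      by (intro DERIV_diff H1 t B Pin[OF t])
    then show "((\<lambda>t. \<phi> (x, t) - B t) has_real_derivative 0) (at t within {t. (x, t) \<in> U})"
      using Q\<beta>[OF t] by (simp add: has_field_derivative_at_within)
  qed
  define a where "a x = \<phi> (x, SOME t. (x, t) \<in> U) - B (SOME t. (x, t) \<in> U)" for x
  show ?thesis
  proof (intro exI allI impI)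
    fix x y assume xy: "(x, y) \<in> U"
    obtain c where c: "\<forall>t\<in>{t. (x, t) \<in> U}. \<phi> (x, t) - B t = c" using cst by blast
    have "(x, SOME t. (x, t) \<in> U) \<in> U" using someI[of "\<lambda>t. (x, t) \<in> U", OF xy] .
    then have "a x = c" using c by (simp add: a_def)
    moreover have "\<phi> (x, y) - B y = c" using c xy by simp
    ultimately show "\<phi> (x, y) = a x + B y" by simp
  qed
qed

lemma local_mixed:
  fixes \<phi> Q :: "real \<times> real \<Rightarrow> real" and U :: "(real \<times> real) set"
  assumes H1: "\<And>x y. (x, y) \<in> U \<Longrightarrow> ((\<lambda>t. \<phi> (x, t)) has_real_derivative Q (x, y)) (at y)"
    and H2: "((\<lambda>s. Q (s, y0)) has_real_derivative R) (at x0)"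
    and d: "d > 0" "\<And>x y. \<bar>x - x0\<bar> < d \<Longrightarrow> \<bar>y - y0\<bar> < d \<Longrightarrow> (x, y) \<in> U"
    and eq: "\<And>x y. \<bar>x - x0\<bar> < d \<Longrightarrow> \<bar>y - y0\<bar> < d \<Longrightarrow> \<phi> (x, y) = A x + Bf y + K x * M y"
    and K: "(K has_real_derivative k) (at x0)" and M: "(M has_real_derivative m) (at y0)"
  shows "R = k * m"
proof -
  have step: "Q (s, y0) - Q (x0, y0) = (K s - K x0) * m" if s: "\<bar>s - x0\<bar> < d" for s
  proof -
    have in1: "(s, y0) \<in> U" "(x0, y0) \<in> U" using d s by auto
    have D1: "((\<lambda>t. \<phi> (s, t) - \<phi> (x0, t)) has_real_derivative Q (s, y0) - Q (x0, y0)) (at y0)"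
      by (intro DERIV_diff H1 in1)
    have D2: "((\<lambda>t. (A s - A x0) + (K s - K x0) * M t) has_real_derivative (K s - K x0) * m) (at y0)"
      using M by (auto intro!: derivative_eq_intros)
    have D3: "((\<lambda>t. \<phi> (s, t) - \<phi> (x0, t)) has_real_derivative (K s - K x0) * m) (at y0)"
    proof (rule has_field_derivative_transform_within_open[OF D2, of "{y0 - d<..<y0 + d}"])
      fix t assume "t \<in> {y0 - d<..<y0 + d}"
      then have t: "\<bar>t - y0\<bar> < d" by auto
      show "A s - A x0 + (K s - K x0) * M t = \<phi> (s, t) - \<phi> (x0, t)"
        using eq[OF s t] eq[of x0 t] t d(1) by (simp add: algebra_simps)
    qed (use d in auto)
    show ?thesis using DERIV_unique[OF D1 D3] .
  qed
  have D4: "((\<lambda>s. Q (x0, y0) + (K s - K x0) * m) has_real_derivative k * m) (at x0)"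
    using K by (auto intro!: derivative_eq_intros)
  have D5: "((\<lambda>s. Q (s, y0)) has_real_derivative k * m) (at x0)"
  proof (rule has_field_derivative_transform_within_open[OF D4, of "{x0 - d<..<x0 + d}"])
    fix s assume "s \<in> {x0 - d<..<x0 + d}"
    then have s: "\<bar>s - x0\<bar> < d" by auto
    show "Q (x0, y0) + (K s - K x0) * m = Q (s, y0)" using step[OF s] by simp
  qed (use d in auto)
  show ?thesis using DERIV_unique[OF H2 D5] .
qed

lemma px_pair: "px f (x, y) = deriv (\<lambda>t. f (t, y)) x" by (simp add: px_def)

lemma py_pair: "py f (x, y) = deriv (\<lambda>t. f (x, t)) y" by (simp add: py_def)

lemma C2_facts:
  fixes G :: "(real \<times> real) set" and \<zeta> :: "real \<times> real \<Rightarrow> real"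
  assumes oG: "open G" and pos: "\<forall>z\<in>G. \<zeta> z > 0" and C2: "C2_on G \<zeta>"
  shows "\<And>x y. (x, y) \<in> G \<Longrightarrow> ((\<lambda>t. ln (\<zeta> (x, t))) has_real_derivative py (\<lambda>z. ln (\<zeta> z)) (x, y)) (at y)"
    and "\<And>x y. (x, y) \<in> G \<Longrightarrow> (\<lambda>s. ln (\<zeta> (s, y))) differentiable (at x)"
    and "\<And>x y. (x, y) \<in> G \<Longrightarrow> ((\<lambda>s. py (\<lambda>z. ln (\<zeta> z)) (s, y)) has_real_derivative dxdy_log \<zeta> (x, y)) (at x)"
    and "continuous_on G (py (\<lambda>z. ln (\<zeta> z)))"
    and "continuous_on G (dxdy_log \<zeta>)"
proof -
  note C = C2[unfolded C2_on_def has_partials_on_def]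
  have Dy: "((\<lambda>t. \<zeta> (x, t)) has_real_derivative py \<zeta> (x, y)) (at y)" if "(x, y) \<in> G" for x y
    using C that by (simp add: py_pair DERIV_deriv_iff_real_differentiable)
  have Dx: "((\<lambda>t. \<zeta> (t, y)) has_real_derivative px \<zeta> (x, y)) (at x)" if "(x, y) \<in> G" for x y
    using C that by (simp add: px_pair DERIV_deriv_iff_real_differentiable)
  have Dyx: "((\<lambda>t. py \<zeta> (t, y)) has_real_derivative px (py \<zeta>) (x, y)) (at x)" if "(x, y) \<in> G" for x y
    using C that by (simp add: px_pair DERIV_deriv_iff_real_differentiable)
  have Ly: "((\<lambda>t. ln (\<zeta> (x, t))) has_real_derivative py \<zeta> (x, y) / \<zeta> (x, y)) (at y)" if "(x, y) \<in> G" for x y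
    using DERIV_chain2[OF DERIV_ln_divide Dy[OF that]] pos that by simp
  have Lx: "((\<lambda>t. ln (\<zeta> (t, y))) has_real_derivative px \<zeta> (x, y) / \<zeta> (x, y)) (at x)" if "(x, y) \<in> G" for x y
    using DERIV_chain2[OF DERIV_ln_divide Dx[OF that]] pos that by simp
  have Qeq: "py (\<lambda>z. ln (\<zeta> z)) (x, y) = py \<zeta> (x, y) / \<zeta> (x, y)" if "(x, y) \<in> G" for x y
    unfolding py_pair[of "\<lambda>z. ln (\<zeta> z)"] using DERIV_imp_deriv[OF Ly[OF that]] .
  show "\<And>x y. (x, y) \<in> G \<Longrightarrow> ((\<lambda>t. ln (\<zeta> (x, t))) has_real_derivative py (\<lambda>z. ln (\<zeta> z)) (x, y)) (at y)"
    using Ly Qeq by simp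
  show "\<And>x y. (x, y) \<in> G \<Longrightarrow> (\<lambda>s. ln (\<zeta> (s, y))) differentiable (at x)"
    using Lx real_differentiable_def by blast
  have Qeq': "py (\<lambda>z. ln (\<zeta> z)) z = py \<zeta> z / \<zeta> z" if "z \<in> G" for z
    using Qeq[of "fst z" "snd z"] that by simp
  define D where "D z = (px (py \<zeta>) z * \<zeta> z - py \<zeta> z * px \<zeta> z) / (\<zeta> z * \<zeta> z)" for z
  have contD: "continuous_on G D"
    unfolding D_def using C pos by (intro continuous_intros) auto
  have H2: "((\<lambda>s. py (\<lambda>z. ln (\<zeta> z)) (s, y)) has_real_derivative D (x, y)) (at x)" if xy: "(x, y) \<in> G" for x y
  proof -
    have DD: "((\<lambda>s. py \<zeta> (s, y) / \<zeta> (s, y)) has_real_derivative D (x, y)) (at x)"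
    proof -
      have nz: "\<zeta> (x, y) \<noteq> 0" using pos xy by force
      show ?thesis unfolding D_def using DERIV_divide[OF Dyx[OF xy] Dx[OF xy] nz] by simp
    qed
    obtain d where d: "d > 0" "\<And>s t. \<bar>s - x\<bar> < d \<Longrightarrow> \<bar>t - y\<bar> < d \<Longrightarrow> (s, t) \<in> G"
      using box_in_open[OF oG xy] by blast
    show ?thesis
      by (rule has_field_derivative_transform_within_open[OF DD, of "{x - d<..<x + d}"])
        (use d in \<open>auto simp: Qeq\<close>)
  qed
  have Req: "dxdy_log \<zeta> z = D z" if "z \<in> G" for z
  proof -
    obtain x y where z: "z = (x, y)" by fastforce
    show ?thesis unfolding dxdy_log_def z px_pair using DERIV_imp_deriv[OF H2] that z by simp
  qed
  show "\<And>x y. (x, y) \<in> G \<Longrightarrow> ((\<lambda>s. py (\<lambda>z. ln (\<zeta> z)) (s, y)) has_real_derivative dxdy_log \<zeta> (x, y)) (at x)"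
    using H2 Req by simp
  show "continuous_on G (py (\<lambda>z. ln (\<zeta> z)))"
    by (rule continuous_on_eq[of _ "\<lambda>z. py \<zeta> z / \<zeta> z"]) (use C pos Qeq' in \<open>auto intro!: continuous_intros\<close>)
  show "continuous_on G (dxdy_log \<zeta>)"
    by (rule continuous_on_eq[OF contD]) (use Req in auto)
qed

lemma pg_mixed:
  fixes \<phi> Q R :: "real \<times> real \<Rightarrow> real" and U :: "(real \<times> real) set"
    and a b g :: "real \<Rightarrow> real" and s :: real
  assumes oU: "open U"
    and H1: "\<And>x y. (x, y) \<in> U \<Longrightarrow> ((\<lambda>t. \<phi> (x, t)) has_real_derivative Q (x, y)) (at y)"
    and H1x: "\<And>x y. (x, y) \<in> U \<Longrightarrow> (\<lambda>t. \<phi> (t, y)) differentiable (at x)"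
    and H2: "\<And>x y. (x, y) \<in> U \<Longrightarrow> ((\<lambda>t. Q (t, y)) has_real_derivative R (x, y)) (at x)"
    and nz: "\<And>z. z \<in> U \<Longrightarrow> R z \<noteq> 0"
    and form: "\<And>x y. (x, y) \<in> U \<Longrightarrow> \<phi> (x, y) = a x + b y + s * g x * g y"
    and s: "s \<noteq> 0"
    and xy: "(x0, y0) \<in> U"
  shows "R (x0, y0) = s * deriv g x0 * deriv g y0"
proof -
  obtain d where d: "d > 0" "\<And>x y. \<bar>x - x0\<bar> < d \<Longrightarrow> \<bar>y - y0\<bar> < d \<Longrightarrow> (x, y) \<in> U"
    using box_in_open[OF oU xy] by blast
  have eq4: "\<phi> (x, y) = (\<phi> (x, y0) - \<phi> (x0, y0)) + \<phi> (x0, y) + (s * (g x - g x0)) * (g y - g y0)"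
    if x: "\<bar>x - x0\<bar> < d" and y: "\<bar>y - y0\<bar> < d" for x y
  proof -
    have m: "(x, y) \<in> U" "(x, y0) \<in> U" "(x0, y0) \<in> U" "(x0, y) \<in> U"
      using d x y by auto
    show ?thesis using form[OF m(1)] form[OF m(2)] form[OF m(3)] form[OF m(4)]
      by (simp add: algebra_simps)
  qed
  have ex: "(\<exists>x1. \<bar>x1 - x0\<bar> < d \<and> g x1 \<noteq> g x0) \<and> (\<exists>y1. \<bar>y1 - y0\<bar> < d \<and> g y1 \<noteq> g y0)"
  proof (rule ccontr)
    assume na: "\<not> ?thesis"
    have "R (x0, y0) = 0 * 0"
    proof (rule local_mixed[OF H1 H2[OF xy] d, where A = "\<lambda>x. \<phi> (x, y0) - \<phi> (x0, y0)"
          and Bf = "\<lambda>y. \<phi> (x0, y)" and K = "\<lambda>_. 0" and M = "\<lambda>_. 0"])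
      fix x y assume x: "\<bar>x - x0\<bar> < d" and y: "\<bar>y - y0\<bar> < d"
      have "(s * (g x - g x0)) * (g y - g y0) = 0" using na x y by auto
      then show "\<phi> (x, y) = \<phi> (x, y0) - \<phi> (x0, y0) + \<phi> (x0, y) + 0 * 0"
        using eq4[OF x y] by simp
    qed auto
    then show False using nz[OF xy] by simp
  qed
  then obtain x1 y1 where x1: "\<bar>x1 - x0\<bar> < d" "g x1 \<noteq> g x0" and y1: "\<bar>y1 - y0\<bar> < d" "g y1 \<noteq> g y0"
    by blast
  define c1 where "c1 = s * (g x1 - g x0)"
  have c1: "c1 \<noteq> 0" using s x1 by (simp add: c1_def)
  define c2 where "c2 = s * (g y1 - g y0)"
  have c2: "c2 \<noteq> 0" using s y1 by (simp add: c2_def)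
  define m where "m = (Q (x1, y0) - Q (x0, y0)) / c1"
  have gy: "(g has_real_derivative m) (at y0)"
  proof -
    have a1: "((\<lambda>y. \<phi> (x1, y) - \<phi> (x0, y)) has_real_derivative Q (x1, y0) - Q (x0, y0)) (at y0)"
      by (intro DERIV_diff H1) (use d x1 in auto)
    have a2: "((\<lambda>y. g y0 + ((\<phi> (x1, y) - \<phi> (x0, y)) - (\<phi> (x1, y0) - \<phi> (x0, y0))) / c1)
        has_real_derivative m) (at y0)"
      using DERIV_add[OF DERIV_const DERIV_cdivide[OF DERIV_diff[OF a1 DERIV_const]]]
      by (simp add: m_def)
    show ?thesis
    proof (rule has_field_derivative_transform_within_open[OF a2, of "{y0 - d<..<y0 + d}"])
      fix y assume "y \<in> {y0 - d<..<y0 + d}"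
      then have y: "\<bar>y - y0\<bar> < d" by auto
      have "(\<phi> (x1, y) - \<phi> (x0, y)) - (\<phi> (x1, y0) - \<phi> (x0, y0)) = c1 * (g y - g y0)"
        using eq4[OF x1(1) y] unfolding c1_def by linarith
      then show "g y0 + ((\<phi> (x1, y) - \<phi> (x0, y)) - (\<phi> (x1, y0) - \<phi> (x0, y0))) / c1 = g y"
        using c1 by simp
    qed (use d in auto)
  qed
  define Px where "Px x y = deriv (\<lambda>t. \<phi> (t, y)) x" for x y
  have DPx: "((\<lambda>t. \<phi> (t, y)) has_real_derivative Px x y) (at x)" if "(x, y) \<in> U" for x y
    unfolding Px_def using H1x[OF that] DERIV_deriv_iff_real_differentiable by blast
  define k where "k = (Px x0 y1 - Px x0 y0) / c2"
  have gx: "(g has_real_derivative k) (at x0)"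
  proof -
    have a1: "((\<lambda>x. \<phi> (x, y1) - \<phi> (x, y0)) has_real_derivative Px x0 y1 - Px x0 y0) (at x0)"
      by (intro DERIV_diff DPx) (use d y1 in auto)
    have a2: "((\<lambda>x. g x0 + ((\<phi> (x, y1) - \<phi> (x, y0)) - (\<phi> (x0, y1) - \<phi> (x0, y0))) / c2)
        has_real_derivative k) (at x0)"
      using DERIV_add[OF DERIV_const DERIV_cdivide[OF DERIV_diff[OF a1 DERIV_const]]]
      by (simp add: k_def)
    show ?thesis
    proof (rule has_field_derivative_transform_within_open[OF a2, of "{x0 - d<..<x0 + d}"])
      fix x assume "x \<in> {x0 - d<..<x0 + d}"
      then have x: "\<bar>x - x0\<bar> < d" by auto
      have "(\<phi> (x, y1) - \<phi> (x, y0)) - (\<phi> (x0, y1) - \<phi> (x0, y0)) = c2 * (g x - g x0)"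
      proof -
        have "s * (g x - g x0) * (g y1 - g y0) = c2 * (g x - g x0)" by (simp add: c2_def algebra_simps)
        then show ?thesis using eq4[OF x y1(1)] by linarith
      qed
      then show "g x0 + ((\<phi> (x, y1) - \<phi> (x, y0)) - (\<phi> (x0, y1) - \<phi> (x0, y0))) / c2 = g x"
        using c2 by simp
    qed (use d in auto)
  qed
  have "R (x0, y0) = (s * k) * m"
  proof (rule local_mixed[OF H1 H2[OF xy] d, where A = "\<lambda>x. \<phi> (x, y0) - \<phi> (x0, y0)"
        and Bf = "\<lambda>y. \<phi> (x0, y)" and K = "\<lambda>x. s * (g x - g x0)" and M = "\<lambda>y. g y - g y0"])
    show "\<And>x y. \<bar>x - x0\<bar> < d \<Longrightarrow> \<bar>y - y0\<bar> < d \<Longrightarrow>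
        \<phi> (x, y) = \<phi> (x, y0) - \<phi> (x0, y0) + \<phi> (x0, y) + s * (g x - g x0) * (g y - g y0)"
      by (rule eq4)
    show "((\<lambda>x. s * (g x - g x0)) has_real_derivative s * k) (at x0)"
      using gx by (auto intro!: derivative_eq_intros)
    show "((\<lambda>y. g y - g y0) has_real_derivative m) (at y0)"
      using gy by (auto intro!: derivative_eq_intros)
  qed
  then show ?thesis using DERIV_imp_deriv[OF gx] DERIV_imp_deriv[OF gy] by simp
qed

lemma ln_prod_abs:
  fixes u v :: real assumes "u * v > 0" shows "ln (u * v) = ln \<bar>u\<bar> + ln \<bar>v\<bar>"
proof -
  have "u \<noteq> 0" "v \<noteq> 0" using assms by auto
  then have "ln (\<bar>u\<bar> * \<bar>v\<bar>) = ln \<bar>u\<bar> + ln \<bar>v\<bar>" by (simp add: ln_mult)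
  moreover have "u * v = \<bar>u\<bar> * \<bar>v\<bar>" using assms by (simp add: abs_mult[symmetric])
  ultimately show ?thesis by simp
qed

lemma sepI:
  fixes G V :: "(real \<times> real) set" and \<zeta> :: "real \<times> real \<Rightarrow> real"
  assumes oG: "open G" and pos: "\<forall>z\<in>G. \<zeta> z > 0" and C2: "C2_on G \<zeta>"
    and V: "open V" "convex V" "V \<subseteq> G" and z: "\<forall>z\<in>V. dxdy_log \<zeta> z = 0"
  shows "separable_on V \<zeta>"
proof -
  note F = C2_facts[OF oG pos C2]
  have "\<exists>a b. \<forall>x y. (x, y) \<in> V \<longrightarrow> (\<lambda>z. ln (\<zeta> z)) (x, y) = a x + b y"
  proof (rule additive_split[OF V(1,2), where Q = "py (\<lambda>z. ln (\<zeta> z))"])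
    show "continuous_on V (py (\<lambda>z. ln (\<zeta> z)))" using F(4) V(3) continuous_on_subset by blast
    fix x y assume xy: "(x, y) \<in> V"
    show "((\<lambda>t. ln (\<zeta> (x, t))) has_real_derivative py (\<lambda>z. ln (\<zeta> z)) (x, y)) (at y)"
      using F(1) xy V(3) by blast
    show "((\<lambda>s. py (\<lambda>z. ln (\<zeta> z)) (s, y)) has_real_derivative 0) (at x)"
      using F(3)[of x y] xy V(3) z by auto
  qed
  then obtain a b where ab: "\<And>x y. (x, y) \<in> V \<Longrightarrow> ln (\<zeta> (x, y)) = a x + b y" by auto
  show ?thesis unfolding separable_on_def
  proof (intro exI allI impI)
    fix x y assume xy: "(x, y) \<in> V"
    have "\<zeta> (x, y) = exp (ln (\<zeta> (x, y)))" using pos xy V(3) by auto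
    also have "\<dots> = exp (a x) * exp (b y)" using ab[OF xy] by (simp add: exp_add)
    finally show "\<zeta> (x, y) = exp (a x) * exp (b y)" .
  qed
qed

lemma sepD:
  fixes G V :: "(real \<times> real) set" and \<zeta> :: "real \<times> real \<Rightarrow> real"
  assumes oG: "open G" and pos: "\<forall>z\<in>G. \<zeta> z > 0" and C2: "C2_on G \<zeta>"
    and V: "open V" "V \<subseteq> G" and sep: "separable_on V \<zeta>"
  shows "\<forall>z\<in>V. dxdy_log \<zeta> z = 0"
proof
  note F = C2_facts[OF oG pos C2]
  obtain f1 f2 where f: "\<And>x y. (x, y) \<in> V \<Longrightarrow> \<zeta> (x, y) = f1 x * f2 y"
    using sep unfolding separable_on_def by blast
  fix z assume zV: "z \<in> V"
  obtain x0 y0 where z: "z = (x0, y0)" by fastforce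
  obtain d where d: "d > 0" "\<And>x y. \<bar>x - x0\<bar> < d \<Longrightarrow> \<bar>y - y0\<bar> < d \<Longrightarrow> (x, y) \<in> V"
    using box_in_open[OF V(1)] zV z by blast
  have "dxdy_log \<zeta> (x0, y0) = 0 * 0"
  proof (rule local_mixed[where \<phi> = "\<lambda>z. ln (\<zeta> z)" and U = V and Q = "py (\<lambda>z. ln (\<zeta> z))",
        OF _ _ d, where A = "\<lambda>x. ln \<bar>f1 x\<bar>" and Bf = "\<lambda>y. ln \<bar>f2 y\<bar>" and K = "\<lambda>_. 0" and M = "\<lambda>_. 0"])
    show "\<And>x y. (x, y) \<in> V \<Longrightarrow> ((\<lambda>t. ln (\<zeta> (x, t))) has_real_derivative py (\<lambda>z. ln (\<zeta> z)) (x, y)) (at y)"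
      using F(1) V(2) by blast
    show "((\<lambda>s. py (\<lambda>z. ln (\<zeta> z)) (s, y0)) has_real_derivative dxdy_log \<zeta> (x0, y0)) (at x0)"
      using F(3) V(2) zV z by blast
    fix x y assume x: "\<bar>x - x0\<bar> < d" and y: "\<bar>y - y0\<bar> < d"
    have xy: "(x, y) \<in> V" using d x y by auto
    have "\<zeta> (x, y) > 0" using pos xy V(2) by blast
    then have "f1 x * f2 y > 0" using f[OF xy] by simp
    then show "ln (\<zeta> (x, y)) = ln \<bar>f1 x\<bar> + ln \<bar>f2 y\<bar> + 0 * 0"
      using f[OF xy] ln_prod_abs by simp
  qed auto
  then show "dxdy_log \<zeta> z = 0" using z by simp
qed

theorem lemma3p11:
  fixes G :: "(real \<times> real) set" and \<zeta> :: "real \<times> real \<Rightarrow> real"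
  assumes "open G"
    and "\<forall>z\<in>G. \<zeta> z > 0"
    and "C2_on G \<zeta>"
  shows "(convex G \<longrightarrow> ((\<forall>z\<in>G. dxdy_log \<zeta> z = 0) \<longleftrightarrow> separable_on G \<zeta>))
    \<and> open {z\<in>G. dxdy_log \<zeta> z \<noteq> 0}
    \<and> (strictly_non_separable_on G \<zeta> \<longleftrightarrow> G \<subseteq> closure {z\<in>G. dxdy_log \<zeta> z \<noteq> 0})
    \<and> (\<forall>U. U \<subseteq> {z\<in>G. dxdy_log \<zeta> z \<noteq> 0} \<and> symmetric_set U \<and> open U \<and> convex U \<longrightarrow>
          ((separable_on U (dxdy_log \<zeta>) \<and> symmetric_fun_on U (dxdy_log \<zeta>))
             \<longleftrightarrow> pseudo_gaussian_on U \<zeta>))"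
proof -
  note oG = assms(1) and pos = assms(2) and C2 = assms(3)
  note F = C2_facts[OF oG pos C2]
  define G' where "G' = {z\<in>G. dxdy_log \<zeta> z \<noteq> 0}"
  have part1: "convex G \<longrightarrow> ((\<forall>z\<in>G. dxdy_log \<zeta> z = 0) \<longleftrightarrow> separable_on G \<zeta>)"
    using sepI[OF oG pos C2 oG _ order_refl] sepD[OF oG pos C2 oG order_refl] by blast
  have oG': "open G'"
  proof -
    have "open (G \<inter> dxdy_log \<zeta> -` (- {0}))"
      by (rule continuous_open_preimage[OF F(5) oG]) auto
    moreover have "G \<inter> dxdy_log \<zeta> -` (- {0}) = G'" by (auto simp: G'_def)
    ultimately show ?thesis by simp
  qed
  have part2: "strictly_non_separable_on G \<zeta> \<longleftrightarrow> G \<subseteq> closure G'"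
  proof
    assume sns: "strictly_non_separable_on G \<zeta>"
    show "G \<subseteq> closure G'"
    proof
      fix z assume zG: "z \<in> G"
      show "z \<in> closure G'"
      proof (rule ccontr)
        assume "z \<notin> closure G'"
        then obtain e where e: "e > 0" "\<And>w. w \<in> G' \<Longrightarrow> \<not> dist w z < e"
          unfolding closure_approachable by blast
        obtain e' where e': "e' > 0" "ball z e' \<subseteq> G" using oG zG open_contains_ball by blast
        define V where "V = ball z (min e e')"
        have V: "open V" "convex V" "V \<subseteq> G" "V \<noteq> {}"
          using e e' by (auto simp: V_def)
        have "\<forall>w\<in>V. dxdy_log \<zeta> w = 0"
        proof
          fix w assume w: "w \<in> V"
          then have "w \<in> G" "dist w z < e" using V(3) by (auto simp: V_def dist_commute)
          then show "dxdy_log \<zeta> w = 0" using e(2)[of w] by (auto simp: G'_def)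
        qed
        then have "separable_on V \<zeta>" using sepI[OF oG pos C2 V(1,2,3)] by blast
        then show False using sns V unfolding strictly_non_separable_on_def by blast
      qed
    qed
  next
    assume cl: "G \<subseteq> closure G'"
    show "strictly_non_separable_on G \<zeta>"
      unfolding strictly_non_separable_on_def
    proof (intro allI impI notI)
      fix V assume V: "open V \<and> V \<noteq> {} \<and> V \<subseteq> G" and sep: "separable_on V \<zeta>"
      then have z: "\<forall>z\<in>V. dxdy_log \<zeta> z = 0" using sepD[OF oG pos C2] by blast
      have "V \<inter> closure G' \<noteq> {}" using V cl by blast
      then have "V \<inter> G' \<noteq> {}" using open_Int_closure_eq_empty V by blast
      then show False using z by (auto simp: G'_def)
    qed
  qed
  have part3: "(separable_on U (dxdy_log \<zeta>) \<and> symmetric_fun_on U (dxdy_log \<zeta>)) \<longleftrightarrow> pseudo_gaussian_on U \<zeta>"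
    if U: "U \<subseteq> G'" "symmetric_set U" "open U" "convex U" for U
  proof -
    have UG: "U \<subseteq> G" using U(1) by (auto simp: G'_def)
    have nz: "\<And>z. z \<in> U \<Longrightarrow> dxdy_log \<zeta> z \<noteq> 0" using U(1) by (auto simp: G'_def)
    have swapU: "(y, x) \<in> U" if xy: "(x, y) \<in> U" for x y
    proof -
      have "swap2 (x, y) \<in> swap2 ` U" using xy by blast
      then have "swap2 (x, y) \<in> U" using U(2) unfolding symmetric_set_def by simp
      then show "(y, x) \<in> U" by (simp add: swap2_def)
    qed
    show ?thesis
    proof
      assume A: "separable_on U (dxdy_log \<zeta>) \<and> symmetric_fun_on U (dxdy_log \<zeta>)"
      obtain h1 h2 where h: "\<And>x y. (x, y) \<in> U \<Longrightarrow> dxdy_log \<zeta> (x, y) = h1 x * h2 y"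
        using A unfolding separable_on_def by blast
      have sym: "dxdy_log \<zeta> (y, x) = dxdy_log \<zeta> (x, y)" if xy: "(x, y) \<in> U" for x y
      proof -
        have "dxdy_log \<zeta> (swap2 (x, y)) = dxdy_log \<zeta> (x, y)"
          using A xy unfolding symmetric_fun_on_def by blast
        then show ?thesis by (simp add: swap2_def)
      qed
      show "pseudo_gaussian_on U \<zeta>"
      proof (cases "U = {}")
        case True
        show ?thesis unfolding pseudo_gaussian_on_def True by auto
      next
        case False
        define P where "P = fst ` U"
        have P1: "\<And>x y. (x, y) \<in> U \<Longrightarrow> x \<in> P" by (force simp: P_def)
        have P2: "\<And>x y. (x, y) \<in> U \<Longrightarrow> y \<in> P" using P1 swapU by blast
        have Pex: "\<And>x. x \<in> P \<Longrightarrow> \<exists>y. (x, y) \<in> U" by (auto simp: P_def)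
        have oP: "open P" unfolding P_def by (rule open_image_fst[OF U(3)])
        have cP: "convex P" unfolding P_def by (rule convex_linear_image[OF linear_fst U(4)])
        have hnz: "h1 x \<noteq> 0 \<and> h2 x \<noteq> 0" if x: "x \<in> P" for x
        proof -
          obtain y where xy: "(x, y) \<in> U" using Pex[OF x] by blast
          have "h1 x * h2 y \<noteq> 0" using nz[OF xy] h[OF xy] by simp
          moreover have "h1 y * h2 x \<noteq> 0" using nz[OF swapU[OF xy]] h[OF swapU[OF xy]] by simp
          ultimately show ?thesis by simp
        qed
        define r where "r x = h1 x / h2 x" for x
        have rel: "r x = r y" if xy: "(x, y) \<in> U" for x y
        proof -
          have e: "h1 x * h2 y = h1 y * h2 x" using h[OF xy] h[OF swapU[OF xy]] sym[OF xy] by simp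
          have "h2 x \<noteq> 0" "h2 y \<noteq> 0" using hnz P1[OF xy] P2[OF xy] by auto
          then show "r x = r y" unfolding r_def using e by (simp add: field_simps)
        qed
        obtain p0 where p0: "p0 \<in> P" using False by (auto simp: P_def)
        have rc: "r x = r p0" if x: "x \<in> P" for x
        proof (rule connected_local_const[where A = P and a = x and b = p0 and f = r])
          show "connected P" using convex_connected[OF cP] .
          show "x \<in> P" by fact
          show "p0 \<in> P" by fact
          show "\<forall>a\<in>P. eventually (\<lambda>b. r a = r b) (at a within P)"
          proof
            fix a assume a: "a \<in> P"
            obtain y0 where ay: "(a, y0) \<in> U" using Pex[OF a] by blast
            obtain d where d: "d > 0" "\<And>x y. \<bar>x - a\<bar> < d \<Longrightarrow> \<bar>y - y0\<bar> < d \<Longrightarrow> (x, y) \<in> U"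
              using box_in_open[OF U(3) ay] by blast
            show "eventually (\<lambda>b. r a = r b) (at a within P)"
              unfolding eventually_at
            proof (intro exI[of _ d] conjI ballI impI)
              show "d > 0" by fact
              fix b assume "b \<in> P" "b \<noteq> a \<and> dist b a < d"
              then have "(b, y0) \<in> U" using d by (auto simp: dist_real_def)
              then show "r a = r b" using rel[OF ay] rel by metis
            qed
          qed
        qed
        define c where "c = r p0"
        have c0: "c \<noteq> 0" using hnz[OF p0] by (simp add: c_def r_def)
        have h1c: "h1 x = c * h2 x" if x: "x \<in> P" for x
        proof -
          have "h1 x / h2 x = c" using rc[OF x] by (simp add: r_def c_def)
          then show ?thesis using hnz[OF x] by (simp add: divide_eq_eq)
        qed
        define sg where "sg = (if c > 0 then 1 else -1 :: real)"
        define kk where "kk = sqrt \<bar>c\<bar>"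
        define H where "H x = kk * h2 x" for x
        have kk2: "kk * kk = \<bar>c\<bar>" unfolding kk_def by simp
        have ck: "c = sg * kk * kk" using kk2 by (simp add: sg_def mult.assoc abs_if)
        have kk0: "kk \<noteq> 0" using c0 by (simp add: kk_def)
        have sg: "sg = 1 \<or> sg = -1" by (simp add: sg_def)
        have sg0: "sg \<noteq> 0" by (simp add: sg_def)
        have RH: "dxdy_log \<zeta> (x, y) = sg * H x * H y" if xy: "(x, y) \<in> U" for x y
        proof -
          have "dxdy_log \<zeta> (x, y) = h1 x * h2 y" by (rule h[OF xy])
          also have "\<dots> = c * h2 x * h2 y" using h1c[OF P1[OF xy]] by simp
          also have "\<dots> = sg * H x * H y" by (simp add: ck H_def algebra_simps)
          finally show ?thesis .
        qed
        have Hnz: "H x \<noteq> 0" if "x \<in> P" for x using hnz[OF that] kk0 by (simp add: H_def)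
        have contR: "continuous_on U (dxdy_log \<zeta>)" using F(5) UG continuous_on_subset by blast
        have contH: "continuous_on P H"
        proof (subst continuous_on_eq_continuous_at[OF oP], intro ballI)
          fix x0 assume x0: "x0 \<in> P"
          obtain y0 where xy0: "(x0, y0) \<in> U" using Pex[OF x0] by blast
          obtain d where d: "d > 0" "\<And>x y. \<bar>x - x0\<bar> < d \<Longrightarrow> \<bar>y - y0\<bar> < d \<Longrightarrow> (x, y) \<in> U"
            using box_in_open[OF U(3) xy0] by blast
          have y0P: "y0 \<in> P" using P2[OF xy0] .
          have den: "sg * H y0 \<noteq> 0" using Hnz[OF y0P] sg0 by simp
          have "isCont (dxdy_log \<zeta>) (x0, y0)" using contR U(3) xy0 continuous_on_eq_continuous_at by blast
          then have "isCont (\<lambda>x. dxdy_log \<zeta> (x, y0)) x0"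
            using continuous_at_compose[of x0 "\<lambda>x. (x, y0)" "dxdy_log \<zeta>"] by (simp add: o_def)
          then have ic: "isCont (\<lambda>x. dxdy_log \<zeta> (x, y0) / (sg * H y0)) x0"
            by (intro continuous_intros) (use den in auto)
          have eqH: "dxdy_log \<zeta> (x, y0) / (sg * H y0) = H x" if x: "dist x x0 < d" for x
          proof -
            have "(x, y0) \<in> U" using d x by (auto simp: dist_real_def)
            then have "dxdy_log \<zeta> (x, y0) = H x * (sg * H y0)" using RH by (simp add: algebra_simps)
            then show ?thesis using den by simp
          qed
          show "isCont H x0"
            by (rule continuous_transform_within[OF ic d(1)]) (use eqH in auto)
        qed
        obtain Fa where Fa: "\<And>x. x \<in> P \<Longrightarrow> (Fa has_real_derivative H x) (at x)"
          using antideriv[OF oP cP contH] by blast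
        have contF: "continuous_on P Fa"
          using Fa DERIV_isCont continuous_at_imp_continuous_on by blast
        define Q' where "Q' z = py (\<lambda>z. ln (\<zeta> z)) z - sg * Fa (fst z) * H (snd z)" for z
        have "\<exists>a b. \<forall>x y. (x, y) \<in> U \<longrightarrow>
            (\<lambda>z. ln (\<zeta> z) - sg * Fa (fst z) * Fa (snd z)) (x, y) = a x + b y"
        proof (rule additive_split[OF U(3,4), where Q = Q'])
          show "continuous_on U Q'"
          proof -
            have c1: "continuous_on U (py (\<lambda>z. ln (\<zeta> z)))" using F(4) UG continuous_on_subset by blast
            have c2: "continuous_on U (\<lambda>z. Fa (fst z))"
              by (rule continuous_on_compose2[OF contF continuous_on_fst]) (auto simp: P_def)
            have c3: "continuous_on U (\<lambda>z. H (snd z))"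
              by (rule continuous_on_compose2[OF contH continuous_on_snd]) (use P2 in auto)
            show ?thesis unfolding Q'_def using c1 c2 c3 by (intro continuous_intros)
          qed
        next
          fix x y assume xy: "(x, y) \<in> U"
          have d1: "((\<lambda>t. ln (\<zeta> (x, t))) has_real_derivative py (\<lambda>z. ln (\<zeta> z)) (x, y)) (at y)"
            using F(1) xy UG by blast
          have d2: "(Fa has_real_derivative H y) (at y)" using Fa P2[OF xy] by blast
          have "((\<lambda>t. ln (\<zeta> (x, t)) - sg * Fa x * Fa t) has_real_derivative
              py (\<lambda>z. ln (\<zeta> z)) (x, y) - sg * Fa x * H y) (at y)"
            by (intro DERIV_diff d1 DERIV_cmult d2)
          then show "((\<lambda>t. (\<lambda>z. ln (\<zeta> z) - sg * Fa (fst z) * Fa (snd z)) (x, t)) has_real_derivative Q' (x, y)) (at y)"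
            by (simp add: Q'_def)
        next
          fix x y assume xy: "(x, y) \<in> U"
          have e1: "((\<lambda>s. py (\<lambda>z. ln (\<zeta> z)) (s, y)) has_real_derivative dxdy_log \<zeta> (x, y)) (at x)"
            using F(3) xy UG by blast
          have e2: "(Fa has_real_derivative H x) (at x)" using Fa P1[OF xy] by blast
          have "((\<lambda>s. py (\<lambda>z. ln (\<zeta> z)) (s, y) - sg * Fa s * H y) has_real_derivative
              dxdy_log \<zeta> (x, y) - sg * H x * H y) (at x)"
            by (intro DERIV_diff e1 DERIV_cmult_right DERIV_cmult e2)
          then show "((\<lambda>s. Q' (s, y)) has_real_derivative 0) (at x)"
            using RH[OF xy] by (simp add: Q'_def)
        qed
        then obtain a b where ab: "\<And>x y. (x, y) \<in> U \<Longrightarrow> ln (\<zeta> (x, y)) - sg * Fa x * Fa y = a x + b y"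
          by auto
        show ?thesis unfolding pseudo_gaussian_on_def
        proof (rule exI[of _ "\<lambda>x. exp (a x)"], rule exI[of _ "\<lambda>y. exp (b y)"], rule exI[of _ Fa],
            rule exI[of _ sg], intro conjI allI impI)
          show "sg = 1 \<or> sg = -1" by (rule sg)
          fix x y assume xy: "(x, y) \<in> U"
          have "\<zeta> (x, y) = exp (ln (\<zeta> (x, y)))" using pos xy UG by auto
          also have "ln (\<zeta> (x, y)) = a x + b y + sg * Fa x * Fa y" using ab[OF xy] by simp
          also have "exp (a x + b y + sg * Fa x * Fa y) = exp (a x) * exp (b y) * exp (sg * Fa x * Fa y)"
            by (simp add: exp_add)
          finally show "\<zeta> (x, y) = exp (a x) * exp (b y) * exp (sg * Fa x * Fa y)" .
        qed
      qed
    next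
      assume pg: "pseudo_gaussian_on U \<zeta>"
      obtain f1 f2 f3 s where s: "s = 1 \<or> s = -1"
        and f: "\<And>x y. (x, y) \<in> U \<Longrightarrow> \<zeta> (x, y) = f1 x * f2 y * exp (s * f3 x * f3 y)"
        using pg unfolding pseudo_gaussian_on_def by blast
      have form: "ln (\<zeta> (x, y)) = ln \<bar>f1 x\<bar> + ln \<bar>f2 y\<bar> + s * f3 x * f3 y" if xy: "(x, y) \<in> U" for x y
      proof -
        have p: "\<zeta> (x, y) > 0" using pos xy UG by blast
        then have "f1 x * f2 y * exp (s * f3 x * f3 y) > 0" using f[OF xy] by simp
        then have fp: "f1 x * f2 y > 0" by (simp add: zero_less_mult_iff)
        have "ln (\<zeta> (x, y)) = ln (f1 x * f2 y) + s * f3 x * f3 y"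
          using f[OF xy] ln_mult_pos[OF fp exp_gt_zero[of "s * f3 x * f3 y"]] by simp
        then show ?thesis using ln_prod_abs[OF fp] by simp
      qed
      have Rf: "dxdy_log \<zeta> (x, y) = s * deriv f3 x * deriv f3 y" if xy: "(x, y) \<in> U" for x y
      proof (rule pg_mixed[where \<phi> = "\<lambda>z. ln (\<zeta> z)" and Q = "py (\<lambda>z. ln (\<zeta> z))" and U = U, OF U(3)])
        show "\<And>x y. (x, y) \<in> U \<Longrightarrow> ((\<lambda>t. ln (\<zeta> (x, t))) has_real_derivative py (\<lambda>z. ln (\<zeta> z)) (x, y)) (at y)"
          using F(1) UG by blast
        show "\<And>x y. (x, y) \<in> U \<Longrightarrow> (\<lambda>t. ln (\<zeta> (t, y))) differentiable (at x)"
          using F(2) UG by blast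
        show "\<And>x y. (x, y) \<in> U \<Longrightarrow> ((\<lambda>t. py (\<lambda>z. ln (\<zeta> z)) (t, y)) has_real_derivative dxdy_log \<zeta> (x, y)) (at x)"
          using F(3) UG by blast
        show "\<And>z. z \<in> U \<Longrightarrow> dxdy_log \<zeta> z \<noteq> 0" by (rule nz)
        show "\<And>x y. (x, y) \<in> U \<Longrightarrow> ln (\<zeta> (x, y)) = ln \<bar>f1 x\<bar> + ln \<bar>f2 y\<bar> + s * f3 x * f3 y"
          by (rule form)
        show "s \<noteq> 0" using s by auto
        show "(x, y) \<in> U" by fact
      qed
      show "separable_on U (dxdy_log \<zeta>) \<and> symmetric_fun_on U (dxdy_log \<zeta>)"
      proof
        show "separable_on U (dxdy_log \<zeta>)" unfolding separable_on_def
          by (rule exI[of _ "\<lambda>x. s * deriv f3 x"], rule exI[of _ "deriv f3"]) (use Rf in auto)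
        show "symmetric_fun_on U (dxdy_log \<zeta>)" unfolding symmetric_fun_on_def
        proof
          fix z assume z: "z \<in> U"
          obtain x y where zz: "z = (x, y)" by fastforce
          have "swap2 z = (y, x)" by (simp add: zz swap2_def)
          then show "dxdy_log \<zeta> (swap2 z) = dxdy_log \<zeta> z"
            using Rf[of y x] Rf[of x y] swapU[of x y] z zz by simp
        qed
      qed
    qed
  qed

  show ?thesis using part1 oG' part2 part3 unfolding G'_def by blast
qed

end
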